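(* Let $G$ be an $\alpha_i$-metric graph ($i\ge 0$ an integer) and $u$ an arbitrary vertex. Then for every $v\in F(u)$, $e(v)\ge diam(G)-3i-2$.
   Context: All graphs are finite, connected, unweighted, undirected, simple; $d(u,v)$ is the shortest-path distance. $I(u,v)=\{x: d(u,x)+d(x,v)=d(u,v)\}$. A graph is $\alpha_i$-metric if for all vertices $u,v,w,x$: whenever $v\in I(u,w)$, $w\in I(v,x)$ and $v,w$ are adjacent, then $d(u,x)\ge d(u,v)+d(v,x)-i$. $e(v)=\max_w d(w,v)$, $diam(G)=\max_v e(v)$, and $F(u)=\{w: d(u,w)=e(u)\}$ is the set of vertices most distant from $u$. *)

theory Defs
  imports Main
begin

fun walk :: "('a \<Rightarrow> 'a \<Rightarrow> bool) \<Rightarrow> 'a list \<Rightarrow> bool" where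
  "walk E [] = True"
| "walk E [x] = True"
| "walk E (x # y # xs) = (E x y \<and> walk E (y # xs))"

definition path_between :: "'a set \<Rightarrow> ('a \<Rightarrow> 'a \<Rightarrow> bool) \<Rightarrow> 'a \<Rightarrow> 'a \<Rightarrow> 'a list \<Rightarrow> bool" where
  "path_between V E u v xs \<longleftrightarrow> xs \<noteq> [] \<and> hd xs = u \<and> last xs = v \<and> set xs \<subseteq> V \<and> walk E xs"

definition graph :: "'a set \<Rightarrow> ('a \<Rightarrow> 'a \<Rightarrow> bool) \<Rightarrow> bool" where
  "graph V E \<longleftrightarrow> finite V \<and> V \<noteq> {}
     \<and> (\<forall>x y. E x y \<longrightarrow> x \<in> V \<and> y \<in> V)
     \<and> (\<forall>x y. E x y \<longrightarrow> E y x)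
     \<and> (\<forall>x. \<not> E x x)
     \<and> (\<forall>u\<in>V. \<forall>v\<in>V. \<exists>xs. path_between V E u v xs)"

definition dist :: "'a set \<Rightarrow> ('a \<Rightarrow> 'a \<Rightarrow> bool) \<Rightarrow> 'a \<Rightarrow> 'a \<Rightarrow> nat" where
  "dist V E u v = (LEAST n. \<exists>xs. path_between V E u v xs \<and> length xs = Suc n)"

definition interval :: "'a set \<Rightarrow> ('a \<Rightarrow> 'a \<Rightarrow> bool) \<Rightarrow> 'a \<Rightarrow> 'a \<Rightarrow> 'a set" where
  "interval V E u v = {x \<in> V. dist V E u x + dist V E x v = dist V E u v}"

definition alpha_metric :: "nat \<Rightarrow> 'a set \<Rightarrow> ('a \<Rightarrow> 'a \<Rightarrow> bool) \<Rightarrow> bool" where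
  "alpha_metric i V E \<longleftrightarrow>
     (\<forall>u\<in>V. \<forall>v\<in>V. \<forall>w\<in>V. \<forall>x\<in>V.
        v \<in> interval V E u w \<and> w \<in> interval V E v x \<and> E v w \<longrightarrow>
        int (dist V E u x) \<ge> int (dist V E u v) + int (dist V E v x) - int i)"

definition ecc :: "'a set \<Rightarrow> ('a \<Rightarrow> 'a \<Rightarrow> bool) \<Rightarrow> 'a \<Rightarrow> nat" where
  "ecc V E v = Max ((\<lambda>w. dist V E w v) ` V)"

definition diam :: "'a set \<Rightarrow> ('a \<Rightarrow> 'a \<Rightarrow> bool) \<Rightarrow> nat" where
  "diam V E = Max (ecc V E ` V)"

definition farthest :: "'a set \<Rightarrow> ('a \<Rightarrow> 'a \<Rightarrow> bool) \<Rightarrow> 'a \<Rightarrow> 'a set" where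
  "farthest V E u = {w \<in> V. dist V E u w = ecc V E u}"

end

theory Submission
  imports Defs
begin

lemma walk_append: "walk E (xs @ y # ys) \<longleftrightarrow> walk E (xs @ [y]) \<and> walk E (y # ys)"
proof (induction xs)
  case Nil
  then show ?case by simp
next
  case (Cons a xs)
  then show ?case by (cases xs) auto
qed

lemma walk_rev:
  assumes "\<forall>x y. E x y \<longrightarrow> E y x" and "walk E xs"
  shows "walk E (rev xs)"
  using assms(2)
proof (induction xs)
  case (Cons a xs)
  show ?case
  proof (cases xs)
    case Nil
    then show ?thesis by simp
  next
    case (Cons b t)
    have "walk E xs" using Cons.prems Cons by simp
    then have "walk E (rev t @ [b])" using Cons.IH Cons by simp
    moreover have "walk E [b, a]" using Cons.prems Cons assms(1) by auto
    ultimately have "walk E (rev t @ b # [a])" using walk_append by fastforce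
    then show ?thesis using Cons by simp
  qed
qed simp

lemma path_concat:
  assumes "path_between V E u v xs" "path_between V E v w ys"
  shows "path_between V E u w (xs @ tl ys) \<and> length (xs @ tl ys) = length xs + length ys - 1"
proof -
  obtain xs' where xs: "xs = xs' @ [v]"
    using assms(1) unfolding path_between_def
    by (metis append_butlast_last_id)
  obtain ys' where ys: "ys = v # ys'"
    using assms(2) unfolding path_between_def
    by (metis list.collapse)
  have w1: "walk E (xs' @ [v])" "walk E (v # ys')"
    using assms xs ys unfolding path_between_def by auto
  have "walk E (xs' @ v # ys')" using w1 walk_append by fastforce
  moreover have "hd (xs' @ v # ys') = u"
    using assms(1) xs unfolding path_between_def by (cases xs') auto
  moreover have "last (xs' @ v # ys') = w"
    using assms(2) ys unfolding path_between_def by (cases ys') auto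
  moreover have "set (xs' @ v # ys') \<subseteq> V"
    using assms xs ys unfolding path_between_def by auto
  ultimately show ?thesis using xs ys unfolding path_between_def by auto
qed

locale ag =
  fixes V :: "'a set" and E :: "'a \<Rightarrow> 'a \<Rightarrow> bool" and i :: nat
  assumes G: "graph V E" and AM: "alpha_metric i V E"
begin

abbreviation d where "d \<equiv> dist V E"

lemma symE: "E x y \<Longrightarrow> E y x" using G unfolding graph_def by blast
lemma EV: "E x y \<Longrightarrow> x \<in> V \<and> y \<in> V" using G unfolding graph_def by blast
lemma irr: "\<not> E x x" using G unfolding graph_def by blast
lemma finV: "finite V" using G unfolding graph_def by blast
lemma neV: "V \<noteq> {}" using G unfolding graph_def by blast

lemma dist_path:
  assumes "u \<in> V" "v \<in> V"
  shows "\<exists>xs. path_between V E u v xs \<and> length xs = Suc (d u v)"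
proof -
  obtain xs where p: "path_between V E u v xs" using G assms unfolding graph_def by blast
  then have ne: "xs \<noteq> []" unfolding path_between_def by auto
  have "\<exists>n ys. path_between V E u v ys \<and> length ys = Suc n"
    using p ne by (metis length_greater_0_conv Suc_pred)
  then show ?thesis unfolding dist_def by (rule LeastI_ex)
qed

lemma dist_le:
  assumes "path_between V E u v xs"
  shows "d u v + 1 \<le> length xs"
proof -
  have ne: "xs \<noteq> []" using assms unfolding path_between_def by auto
  then have "length xs = Suc (length xs - 1)" by simp
  then have "d u v \<le> length xs - 1"
    unfolding dist_def using assms by (intro Least_le) blast
  then show ?thesis using ne by (cases xs) auto
qed

lemma dist_self: "u \<in> V \<Longrightarrow> d u u = 0"
  using dist_le[of u u "[u]"] unfolding path_between_def by simp

lemma dist_0: assumes "u \<in> V" "v \<in> V" "d u v = 0" shows "u = v"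
proof -
  obtain xs where "path_between V E u v xs" "length xs = 1"
    using dist_path assms by fastforce
  then show ?thesis unfolding path_between_def by (cases xs) auto
qed

lemma tri: assumes "u \<in> V" "v \<in> V" "w \<in> V" shows "d u w \<le> d u v + d v w"
proof -
  obtain xs where 1: "path_between V E u v xs" "length xs = Suc (d u v)"
    using dist_path assms by blast
  obtain ys where 2: "path_between V E v w ys" "length ys = Suc (d v w)"
    using dist_path assms by blast
  show ?thesis using path_concat[OF 1(1) 2(1)] dist_le 1 2 by fastforce
qed

lemma sym: assumes "u \<in> V" "v \<in> V" shows "d u v = d v u"
proof -
  have *: "d b a \<le> d a b" if ab: "a \<in> V" "b \<in> V" for a b
  proof -
    obtain xs where 1: "path_between V E a b xs" "length xs = Suc (d a b)"
      using dist_path ab by blast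
    have "path_between V E b a (rev xs)"
      using 1 walk_rev[of E xs] symE unfolding path_between_def
      by (auto simp: hd_rev last_rev)
    then show ?thesis using dist_le 1 by fastforce
  qed
  show ?thesis using *[of u v] *[of v u] assms by simp
qed

lemma dist_edge: assumes "E u v" shows "d u v = 1"
proof -
  have "path_between V E u v [u, v]" using assms EV unfolding path_between_def by auto
  then have "d u v \<le> 1" using dist_le by fastforce
  moreover have "d u v \<noteq> 0" using dist_0 assms irr EV by blast
  ultimately show ?thesis by simp
qed

lemma lip: assumes "E a b" "w \<in> V" shows "d w b \<le> d w a + 1" "d w a \<le> d w b + 1"
  using tri[of w a b] tri[of w b a] dist_edge[OF assms(1)] dist_edge[OF symE[OF assms(1)]] EV assms
  by auto

lemma pred:
  assumes "u \<in> V" "w \<in> V" "u \<noteq> w"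
  shows "\<exists>n. E n w \<and> d u n + 1 = d u w"
proof -
  obtain xs where 1: "path_between V E u w xs" "length xs = Suc (d u w)"
    using dist_path assms by blast
  have "d u w \<noteq> 0" using dist_0 assms by blast
  then have b1: "butlast xs \<noteq> []" using 1 by (cases xs) auto
  define ys where "ys = butlast (butlast xs)"
  define n where "n = last (butlast xs)"
  have xsne: "xs \<noteq> []" using 1 by auto
  have xs: "xs = ys @ [n, w]"
    using append_butlast_last_id[OF xsne] append_butlast_last_id[OF b1] 1(1)
    unfolding ys_def n_def path_between_def by (metis append.assoc append_Cons append_Nil)
  have wk: "walk E (ys @ [n]) \<and> walk E [n, w]"
    using 1(1) walk_append[of E ys n "[w]"] xs unfolding path_between_def by simp
  have "path_between V E u n (ys @ [n])"
    using 1(1) xs wk unfolding path_between_def by (cases ys) auto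
  then have "d u n + 1 \<le> length xs - 1" using dist_le xs by fastforce
  moreover have "E n w" using wk by simp
  moreover have "d u w \<le> d u n + 1" using tri[of u n w] dist_edge[of n w] EV assms \<open>E n w\<close> by auto
  ultimately show ?thesis using 1 by auto
qed


lemma alpha_use:
  assumes "u \<in> V" "v \<in> V" "w \<in> V" "x \<in> V"
    "d u v + d v w = d u w" "d v w + d w x = d v x" "E v w"
  shows "d u v + d v x \<le> d u x + i"
proof -
  have "v \<in> interval V E u w" "w \<in> interval V E v x"
    using assms unfolding interval_def by auto
  then have "int (d u x) \<ge> int (d u v) + int (d v x) - int i"
    using AM assms unfolding alpha_metric_def by blast
  then show ?thesis by linarith
qed

lemma slice:
  assumes xV: "x \<in> V" and yV: "y \<in> V"
  shows "\<forall>z z'. z \<in> V \<and> z' \<in> V \<and> d x z = m \<and> d x z' = m \<and> d x z + d z y = d x y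
     \<and> d x z' + d z' y = d x y \<longrightarrow> d z z' \<le> i + 1"
proof (induction m)
  case 0
  show ?case
  proof (intro allI impI)
    fix z z' assume h: "z \<in> V \<and> z' \<in> V \<and> d x z = 0 \<and> d x z' = 0 \<and> d x z + d z y = d x y
     \<and> d x z' + d z' y = d x y"
    then have "z = x" "z' = x" using dist_0 xV by metis+
    then show "d z z' \<le> i + 1" using dist_self xV by simp
  qed
next
  case (Suc m)
  show ?case
  proof (intro allI impI)
    fix z z' assume h: "z \<in> V \<and> z' \<in> V \<and> d x z = Suc m \<and> d x z' = Suc m \<and> d x z + d z y = d x y
     \<and> d x z' + d z' y = d x y"
    have zV: "z \<in> V" and z'V: "z' \<in> V" using h by auto
    show "d z z' \<le> i + 1"
    proof (rule ccontr)
      assume "\<not> d z z' \<le> i + 1"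
      then have Lb: "d z z' \<ge> i + 2" by simp
      define L where "L = d z z'"
      have "x \<noteq> z" "x \<noteq> z'" using h dist_self xV by auto
      then obtain c c' where c: "E c z" "d x c + 1 = d x z" and c': "E c' z'" "d x c' + 1 = d x z'"
        using pred xV zV z'V by metis
      have cV: "c \<in> V" and c'V: "c' \<in> V" using c c' EV by auto
      have dcz: "d c z = 1" "d z c = 1" using dist_edge c(1) symE by auto
      have dcz': "d c' z' = 1" "d z' c' = 1" using dist_edge c'(1) symE by auto
      have cy: "d c y = d z y + 1"
        using tri[OF xV cV yV] tri[OF cV zV yV] dcz h c by linarith
      have c'y: "d c' y = d z' y + 1"
        using tri[OF xV c'V yV] tri[OF c'V z'V yV] dcz' h c' by linarith
      have s1: "d y z = d z y" "d y z' = d z' y" "d y c = d c y" "d y c' = d c' y"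
        using sym yV zV z'V cV c'V by auto
      have s2: "d z' c = d c z'" "d c' c = d c c'" "d z z' = d z' z"
        using sym zV z'V cV c'V by auto
      have zyeq: "d z y = d z' y" using h by simp
      have l1: "d c z' \<le> L + 1" "L \<le> d c z' + 1"
        using tri[OF cV zV z'V] tri[OF zV cV z'V] dcz L_def by auto
      have n1: "d c z' \<noteq> L - 1"
      proof
        assume e: "d c z' = L - 1"
        have "d y z + d z z' \<le> d y z' + i"
          by (rule alpha_use[OF yV zV cV z'V]) (use s1 cy dcz e Lb L_def c symE in auto)
        then show False using s1 zyeq Lb L_def by linarith
      qed
      have n2: "d c z' \<noteq> L + 1"
      proof
        assume e: "d c z' = L + 1"
        have "d x c + d c z' \<le> d x z' + i"
          by (rule alpha_use[OF xV cV zV z'V]) (use c dcz e L_def in auto)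
        then show False using c c' h e Lb L_def by linarith
      qed
      have ecz': "d c z' = L" using l1 n1 n2 by linarith
      have l2: "d c c' \<le> L + 1" "L \<le> d c c' + 1"
        using tri[OF cV z'V c'V] tri[OF cV c'V z'V] dcz' ecz' by auto
      have n3: "d c c' \<noteq> L - 1"
      proof
        assume e: "d c c' = L - 1"
        have "d y z' + d z' c \<le> d y c + i"
          by (rule alpha_use[OF yV z'V c'V cV]) (use s1 s2 c'y dcz' e ecz' Lb L_def c' symE in auto)
        then show False using s1 s2 ecz' cy zyeq Lb L_def by linarith
      qed
      have n4: "d c c' \<noteq> L + 1"
      proof
        assume e: "d c c' = L + 1"
        have "d x c' + d c' c \<le> d x c + i"
          by (rule alpha_use[OF xV c'V z'V cV]) (use s2 c' dcz' e ecz' in auto)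
        then show False using c c' h e s2 Lb L_def by linarith
      qed
      have "d c c' = L" using l2 n3 n4 by linarith
      moreover have "d c c' \<le> i + 1"
        using Suc.IH cV c'V c c' h cy c'y by fastforce
      ultimately show False using Lb L_def by linarith
    qed
  qed
qed


lemma geo_point:
  assumes xV: "x \<in> V" and yV: "y \<in> V"
  shows "j \<le> d x y \<Longrightarrow> \<exists>p\<in>V. d x p = d x y - j \<and> d p y = j"
proof (induction j)
  case 0
  then show ?case using yV dist_self by auto
next
  case (Suc j)
  then obtain p where p: "p \<in> V" "d x p = d x y - j" "d p y = j" by auto
  have "x \<noteq> p" using p Suc.prems dist_self xV by auto
  then obtain n where n: "E n p" "d x n + 1 = d x p" using pred xV p(1) by metis
  have nV: "n \<in> V" using n EV by auto
  have "d n y \<le> d n p + d p y" using tri nV p(1) yV by auto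
  moreover have "d n p = 1" using dist_edge n by auto
  moreover have "d x y \<le> d x n + d n y" using tri xV nV yV by auto
  ultimately show ?case using nV n p Suc.prems by (intro bexI[of _ n]) auto
qed

lemma exit:
  assumes xV: "x \<in> V" and yV: "y \<in> V" and wV: "w \<in> V" and zV: "z \<in> V"
    and zm: "d x z = m" and zI: "d x z + d z y = d x y"
    and mn: "\<forall>z'. z' \<in> V \<and> d x z' = m \<and> d x z' + d z' y = d x y \<longrightarrow> d w z \<le> d w z'"
  shows "d w z + m \<le> d w x + i \<or> d w z + (d x y - m) \<le> d w y + i"
proof (cases "w = z")
  case True
  then show ?thesis using sym[OF wV xV] sym[OF wV yV] dist_self wV zm zI by auto
next
  case False
  then obtain n where n: "E n z" "d w n + 1 = d w z" using pred wV zV by metis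
  have nV: "n \<in> V" using n EV by auto
  have dzn: "d z n = 1" "d n z = 1" using dist_edge n(1) symE by auto
  have b1: "d x n \<le> d x z + 1" "d n y \<le> d z y + 1" "d x y \<le> d x n + d n y"
    using tri[OF xV zV nV] tri[OF nV zV yV] tri[OF xV nV yV] dzn by auto
  have s: "d n w = d w n" "d z w = d w z" "d x w = d w x" "d y w = d w y" "d y z = d z y" "d y n = d n y"
    using sym nV wV zV xV yV by auto
  consider "d x n = d x z + 1" | "d n y = d z y + 1" | "d x n \<le> d x z" "d n y \<le> d z y"
    using b1 by linarith
  then show ?thesis
  proof cases
    case 1
    have "d x z + d z w \<le> d x w + i"
      by (rule alpha_use[OF xV zV nV wV]) (use 1 dzn n s symE in auto)
    then show ?thesis using s zm by auto
  next
    case 2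
    have "d y z + d z w \<le> d y w + i"
      by (rule alpha_use[OF yV zV nV wV]) (use 2 dzn n s symE in auto)
    then show ?thesis using s zm zI by auto
  next
    case 3
    then have "d x n = m" "d x n + d n y = d x y" using b1 zm zI by linarith+
    then have "d w z \<le> d w n" using mn nV by blast
    then show ?thesis using n by linarith
  qed
qed

end

theorem lemma10:
  fixes V :: "'a set" and E :: "'a \<Rightarrow> 'a \<Rightarrow> bool" and i :: nat and u v :: 'a
  assumes "graph V E"
    and "alpha_metric i V E"
    and "u \<in> V"
    and "v \<in> farthest V E u"
  shows "int (ecc V E v) \<ge> int (diam V E) - 3 * int i - 2"
proof -
  interpret ag V E i using assms(1,2) by unfold_locales
  define k where "k = ecc V E u"
  have vV: "v \<in> V" and uv: "d u v = k" using assms(4) unfolding farthest_def k_def by auto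
  have uw: "d u w \<le> k" if "w \<in> V" for w
  proof -
    have "d w u \<le> k" unfolding k_def ecc_def using finV that by (intro Max_ge) auto
    then show ?thesis using sym[OF assms(3) that] by simp
  qed
  have vw: "d w v \<le> ecc V E v" if "w \<in> V" for w
    unfolding ecc_def using finV that by (intro Max_ge) auto
  have "diam V E \<in> ecc V E ` V" unfolding diam_def using finV neV by (intro Max_in) auto
  then obtain y where yV: "y \<in> V" and yd: "ecc V E y = diam V E" by auto
  have "ecc V E y \<in> (\<lambda>w. d w y) ` V" unfolding ecc_def using finV neV by (intro Max_in) auto
  then obtain x where xV: "x \<in> V" and xd: "d x y = diam V E" using yd by auto
  define D where "D = d x y"
  define m where "m = D div 2"
  obtain p where p: "p \<in> V" "d x p = D - (D - m)" "d p y = D - m"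
    using geo_point[OF xV yV, of "D - m"] unfolding D_def by auto
  have pQ: "p \<in> V \<and> d x p = m \<and> d x p + d p y = D" using p unfolding m_def by auto
  obtain zu where zu: "zu \<in> V \<and> d x zu = m \<and> d x zu + d zu y = D"
    and zumin: "\<forall>z'. z' \<in> V \<and> d x z' = m \<and> d x z' + d z' y = D \<longrightarrow> d u zu \<le> d u z'"
    using ex_has_least_nat[where P = "\<lambda>z. z \<in> V \<and> d x z = m \<and> d x z + d z y = D" and k = p and m = "d u"] pQ
    by blast
  obtain zv where zv: "zv \<in> V \<and> d x zv = m \<and> d x zv + d zv y = D"
    and zvmin: "\<forall>z'. z' \<in> V \<and> d x z' = m \<and> d x z' + d z' y = D \<longrightarrow> d v zv \<le> d v z'"
    using ex_has_least_nat[where P = "\<lambda>z. z \<in> V \<and> d x z = m \<and> d x z + d z y = D" and k = p and m = "d v"] pQ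
    by blast
  have eu: "d u zu + m \<le> d u x + i \<or> d u zu + (D - m) \<le> d u y + i"
    using exit[OF xV yV assms(3), of zu m] zu zumin unfolding D_def by auto
  have ev: "d v zv + m \<le> d v x + i \<or> d v zv + (D - m) \<le> d v y + i"
    using exit[OF xV yV vV, of zv m] zv zvmin unfolding D_def by auto
  have sl: "d zu zv \<le> i + 1"
    using slice[OF xV yV, of m] zu zv unfolding D_def by blast
  have t: "d u v \<le> d u zu + d zu zv + d zv v"
    using tri[OF assms(3) _ vV, of zu] tri[of zu zv v] zu zv vV by fastforce
  have s: "d zv v = d v zv" "d v x = d x v" "d v y = d y v" using sym zv vV xV yV by auto
  have mm: "m \<le> D - m" "D \<le> 2 * m + 1" unfolding m_def by auto
  have "d x v \<le> ecc V E v" "d y v \<le> ecc V E v" using vw xV yV by auto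
  moreover have "d u x \<le> k" "d u y \<le> k" using uw xV yV by auto
  ultimately have "D \<le> ecc V E v + 3 * i + 2"
    using eu ev sl t s mm uv by linarith
  then show ?thesis using xd unfolding D_def by linarith
qed

end
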